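(* Consider a finite MDP with states $\mathcal{X}=\{1,\dots,n\}$, finite action set $\mathcal{A}$, costs $c(i,a)$, discount factor $\vartheta\in(0,1)$, a policy $\pi:\mathcal{X}\to\mathcal{A}$, uncertainty sets $\mathcal{P}^a_i$ and proxy uncertainty sets $\widehat{\mathcal{P}^a_i}$, an exploration transition matrix $P^{\widehat{\pi}}$ with stationary distribution $\xi$, and a feature matrix $\Phi\in\mathbb{R}^{n\times d}$, all as in the context. Suppose there is $\alpha\in(0,1)$ such that $\vartheta p_j\le\alpha P^{\widehat{\pi}}_{ij}$ for all $i,j\in\mathcal{X}$, $a\in\mathcal{A}$ and $p\in\mathcal{P}^a_i$. Let $\beta^a_i:=\max_{y\in\widehat{U^a_i}}\min_{x\in U^a_i}\|y-x\|_\xi/\xi_{\min}$ and $\beta:=\max_{i\in\mathcal{X}}\beta^{\pi(i)}_i$. If $\alpha^2+\vartheta^2\beta^2<\tfrac12$, then for all $\theta,\theta'\in\mathbb{R}^d$, \[ \|\widehat{T}_\pi(\Phi\theta)-\widehat{T}_\pi(\Phi\theta')\|_\xi^2\le 2(\alpha^2+\vartheta^2\beta^2)\|\Phi\theta-\Phi\theta'\|_\xi^2, \] which is $<\|\Phi\theta-\Phi\theta'\|_\xi^2$ whenever $\Phi\theta\neq\Phi\theta'$. If moreover $\beta^{\pi(i)}_i=0$ for all $i$ (so $\widehat{U^{\pi(i)}_i}=U^{\pi(i)}_i$), then for all $\theta,\theta'\in\mathbb{R}^d$, $\|\widehat{T}_\pi(\Phi\theta)-\widehat{T}_\pi(\P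hi\theta')\|_\xi\le\alpha\|\Phi\theta-\Phi\theta'\|_\xi$.
   Context: For each $i\in\mathcal{X},a\in\mathcal{A}$: $p^a_i\in\Delta_n$ is the (unknown) nominal transition probability vector; $U^a_i\subseteq\mathbb{R}^n$ is a nonempty compact confidence region with $\mathcal{P}^a_i:=\{p^a_i+x\mid x\in U^a_i\}\subseteq\Delta_n$; $\widehat{U^a_i}\supseteq U^a_i$ is a nonempty compact proxy region and $\widehat{\mathcal{P}^a_i}:=\{p^a_i+y\mid y\in\widehat{U^a_i}\}$. $\sigma_S(v):=\sup_{s\in S}s^\top v$. The proxy robust Bellman operator is $(\widehat{T}_\pi v)(i):=c(i,\pi(i))+\vartheta\,\sigma_{\widehat{\mathcal{P}^{\pi(i)}_i}}(v)$ for $v\in\mathbb{R}^n$. $P^{\widehat{\pi}}$ is the $n\times n$ transition probability matrix of the exploration policy used to generate samples, $\xi$ is its steady-state distribution, assumed to have all entries positive, $\xi_{\min}:=\min_i\xi_i$, and $\|x\|_\xi:=(\sum_i\xi_ix_i^2)^{1/2}$. *)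

theory Defs
  imports "HOL-Analysis.Analysis"
begin

text \<open>States are a finite type 'x (so n = CARD('x)); vectors in R^n are real^'x.\<close>

definition prob_simplex :: "(real^'n) set" where
  "prob_simplex = {p. (\<forall>j. 0 \<le> p $ j) \<and> (\<Sum>j\<in>UNIV. p $ j) = 1}"

definition xi_norm :: "real^'n \<Rightarrow> real^'n \<Rightarrow> real" where
  "xi_norm \<xi> x = sqrt (\<Sum>i\<in>UNIV. \<xi> $ i * (x $ i)^2)"

definition support_fn :: "(real^'n) set \<Rightarrow> real^'n \<Rightarrow> real" where
  "support_fn S v = Sup ((\<lambda>s. s \<bullet> v) ` S)"

definition proxy_set :: "real^'n \<Rightarrow> (real^'n) set \<Rightarrow> (real^'n) set" where
  "proxy_set p U' = (\<lambda>y. p + y) ` U'"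

definition proxy_bellman ::
  "('n \<Rightarrow> 'a \<Rightarrow> real) \<Rightarrow> real \<Rightarrow> ('n \<Rightarrow> 'a) \<Rightarrow> ('n \<Rightarrow> 'a \<Rightarrow> real^'n)
     \<Rightarrow> ('n \<Rightarrow> 'a \<Rightarrow> (real^'n) set) \<Rightarrow> real^'n \<Rightarrow> real^'n" where
  "proxy_bellman c \<gamma> \<pi> pnom Uhat v =
     (\<chi> i. c i (\<pi> i) + \<gamma> * support_fn (proxy_set (pnom i (\<pi> i)) (Uhat i (\<pi> i))) v)"

definition xi_min :: "real^'n \<Rightarrow> real" where
  "xi_min \<xi> = Min (range (\<lambda>i. \<xi> $ i))"

text \<open>beta^a_i = (max_{y in hatU} min_{x in U} ||y - x||_xi) / xi_min
  (max/min attained since the sets are nonempty compact; written as Sup/Inf).\<close>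
definition beta_coef :: "real^'n \<Rightarrow> (real^'n) set \<Rightarrow> (real^'n) set \<Rightarrow> real" where
  "beta_coef \<xi> U Uhat =
     Sup ((\<lambda>y. Inf ((\<lambda>x. xi_norm \<xi> (y - x)) ` U)) ` Uhat) / xi_min \<xi>"

end

theory Submission
  imports Defs
begin

lemma xi_norm_nonneg:
  fixes \<xi> :: "real^'n::finite"
  assumes "\<And>i. 0 < \<xi> $ i"
  shows "0 \<le> xi_norm \<xi> z"
  unfolding xi_norm_def using assms by (intro real_sqrt_ge_zero sum_nonneg) (simp add: less_imp_le)

lemma xi_norm_sq:
  fixes \<xi> :: "real^'n::finite"
  assumes "\<And>i. 0 < \<xi> $ i"
  shows "(xi_norm \<xi> z)^2 = (\<Sum>i\<in>UNIV. \<xi> $ i * (z $ i)^2)"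
  unfolding xi_norm_def using assms by (intro real_sqrt_pow2 sum_nonneg) (simp add: less_imp_le)

lemma xi_norm_le_norm:
  fixes \<xi> :: "real^'n::finite"
  assumes "\<xi> \<in> prob_simplex"
  shows "xi_norm \<xi> z \<le> norm z"
proof -
  have "(\<Sum>i\<in>UNIV. \<xi> $ i * (z $ i)^2) \<le> (\<Sum>i\<in>UNIV. \<xi> $ i * (norm z)^2)"
  proof (rule sum_mono)
    fix i
    have "\<bar>z $ i\<bar> \<le> norm z" by (rule component_le_norm_cart)
    hence "(z $ i)^2 \<le> (norm z)^2" by (metis abs_ge_zero power2_abs power_mono)
    thus "\<xi> $ i * (z $ i)^2 \<le> \<xi> $ i * (norm z)^2"
      using assms by (auto simp: prob_simplex_def intro: mult_left_mono)
  qed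
  also have "\<dots> = (norm z)^2" using assms by (simp add: prob_simplex_def sum_distrib_right[symmetric])
  finally show ?thesis unfolding xi_norm_def by (metis norm_ge_zero real_sqrt_le_mono real_sqrt_unique)
qed

lemma xi_min_props:
  fixes \<xi> :: "real^'n::finite"
  assumes "\<And>i. 0 < \<xi> $ i"
  shows "0 < xi_min \<xi>" "\<And>j. xi_min \<xi> \<le> \<xi> $ j"
proof -
  have "xi_min \<xi> \<in> range (\<lambda>i. \<xi> $ i)" unfolding xi_min_def by (rule Min_in) auto
  thus "0 < xi_min \<xi>" using assms by auto
  show "\<And>j. xi_min \<xi> \<le> \<xi> $ j" unfolding xi_min_def by (rule Min_le) auto
qed

lemma weighted_CS:
  fixes \<xi> d w :: "real^'n::finite"
  assumes pos: "\<And>i. 0 < \<xi> $ i"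
  shows "\<bar>d \<bullet> w\<bar> \<le> xi_norm \<xi> d * xi_norm \<xi> w / xi_min \<xi>"
proof -
  define m where "m = xi_min \<xi>"
  have m: "0 < m" "\<And>j. m \<le> \<xi> $ j" using xi_min_props[OF pos] unfolding m_def by auto
  have "(d \<bullet> w)^2 = (\<Sum>j\<in>UNIV. (sqrt (\<xi>$j) * d$j) * (w$j / sqrt (\<xi>$j)))^2"
    unfolding inner_vec_def using pos
    by (intro arg_cong[where f="\<lambda>x. x^2"] sum.cong refl) (simp add: less_imp_le less_imp_neq[symmetric])
  also have "\<dots> \<le> (\<Sum>j\<in>UNIV. (sqrt (\<xi>$j) * d$j)^2) * (\<Sum>j\<in>UNIV. (w$j / sqrt (\<xi>$j))^2)"
    by (rule Cauchy_Schwarz_ineq_sum)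
  also have "(\<Sum>j\<in>UNIV. (sqrt (\<xi>$j) * d$j)^2) = (xi_norm \<xi> d)^2"
    using pos by (simp add: xi_norm_sq power_mult_distrib less_imp_le)
  also have "(\<Sum>j\<in>UNIV. (w$j / sqrt (\<xi>$j))^2) \<le> (\<Sum>j\<in>UNIV. \<xi>$j * (w$j)^2 / m^2)"
  proof (rule sum_mono)
    fix j
    have "m^2 \<le> (\<xi>$j)^2" using m by (simp add: power_mono less_imp_le)
    hence "(w$j)^2 * m^2 \<le> (w$j)^2 * (\<xi>$j * \<xi>$j)" by (simp add: mult_left_mono power2_eq_square)
    thus "(w$j / sqrt (\<xi>$j))^2 \<le> \<xi>$j * (w$j)^2 / m^2"
      using pos[of j] m by (simp add: power_divide less_imp_le divide_simps) (simp add: algebra_simps)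
  qed
  also have "(\<Sum>j\<in>UNIV. \<xi>$j * (w$j)^2 / m^2) = (xi_norm \<xi> w)^2 / m^2"
    using pos by (simp add: xi_norm_sq sum_divide_distrib)
  finally have "(d \<bullet> w)^2 \<le> (xi_norm \<xi> d * xi_norm \<xi> w / m)^2"
    using xi_norm_nonneg[OF pos] by (simp add: power_divide power_mult_distrib mult_left_mono)
  thus ?thesis unfolding m_def[symmetric]
    using xi_norm_nonneg[OF pos, of d] xi_norm_nonneg[OF pos, of w] m
    by (metis abs_le_square_iff abs_of_nonneg divide_nonneg_pos mult_nonneg_nonneg)
qed

lemma support_bound:
  fixes S :: "(real^'n::finite) set"
  assumes ne: "S \<noteq> {}" and bd: "bounded S" and le: "\<And>s. s \<in> S \<Longrightarrow> s \<bullet> v \<le> s \<bullet> v' + B"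
  shows "support_fn S v \<le> support_fn S v' + B"
proof -
  obtain M where M: "\<And>s. s \<in> S \<Longrightarrow> norm s \<le> M" using bd by (auto simp: bounded_iff)
  have bda: "bdd_above ((\<lambda>s. s \<bullet> v') ` S)"
  proof (rule bdd_aboveI2)
    fix s assume "s \<in> S"
    have "s \<bullet> v' \<le> norm s * norm v'" by (rule Cauchy_Schwarz_ineq2[THEN abs_le_D1])
    also have "\<dots> \<le> M * norm v'" using M[OF \<open>s \<in> S\<close>] by (simp add: mult_right_mono)
    finally show "s \<bullet> v' \<le> M * norm v'" .
  qed
  show ?thesis unfolding support_fn_def
  proof (rule cSup_least)
    show "(\<lambda>s. s \<bullet> v) ` S \<noteq> {}" using ne by auto
  next
    fix x assume "x \<in> (\<lambda>s. s \<bullet> v) ` S"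
    then obtain s where s: "s \<in> S" "x = s \<bullet> v" by auto
    have "s \<bullet> v' \<le> Sup ((\<lambda>s. s \<bullet> v') ` S)" using s bda by (auto intro: cSup_upper)
    thus "x \<le> Sup ((\<lambda>s. s \<bullet> v') ` S) + B" using le[OF s(1)] s by linarith
  qed
qed


lemma pointwise:
  fixes p \<xi> r v v' :: "real^'n::finite" and Uc Uh :: "(real^'n) set"
  assumes g: "0 < \<gamma>" and pos: "\<And>i. 0 < \<xi> $ i" and xs: "\<xi> \<in> prob_simplex"
    and Ucne: "Uc \<noteq> {}" and Ucc: "compact Uc" and Uhne: "Uh \<noteq> {}" and Uhc: "compact Uh"
    and simp: "proxy_set p Uc \<subseteq> prob_simplex"
    and dom: "\<And>q j. q \<in> proxy_set p Uc \<Longrightarrow> \<gamma> * q $ j \<le> \<alpha> * r $ j"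
  shows "\<gamma> * \<bar>support_fn (proxy_set p Uh) v - support_fn (proxy_set p Uh) v'\<bar>
     \<le> \<alpha> * (\<Sum>j\<in>UNIV. r $ j * \<bar>(v - v') $ j\<bar>) + \<gamma> * beta_coef \<xi> Uc Uh * xi_norm \<xi> (v - v')"
proof -
  define w where "w = v - v'"
  define m where "m = xi_min \<xi>"
  have m: "0 < m" using xi_min_props[OF pos] unfolding m_def by auto
  define W where "W = xi_norm \<xi> w"
  have W0: "0 \<le> W" unfolding W_def by (rule xi_norm_nonneg[OF pos])
  define A where "A = \<alpha> * (\<Sum>j\<in>UNIV. r $ j * \<bar>w $ j\<bar>)"
  define h where "h = (\<lambda>y. Inf ((\<lambda>x. xi_norm \<xi> (y - x)) ` Uc))"
  define bt where "bt = beta_coef \<xi> Uc Uh"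
  have bt: "Sup (h ` Uh) = bt * m" unfolding bt_def beta_coef_def h_def m_def using m m_def by simp
  obtain x0 where x0: "x0 \<in> Uc" using Ucne by auto
  obtain M where M: "\<And>y. y \<in> Uh \<Longrightarrow> norm y \<le> M" using compact_imp_bounded[OF Uhc] by (auto simp: bounded_iff)
  have hle: "h y \<le> xi_norm \<xi> (y - x)" if "x \<in> Uc" for y x
    unfolding h_def using that xi_norm_nonneg[OF pos]
    by (intro cInf_lower) (auto intro!: bdd_belowI[where m=0])
  have bdh: "bdd_above (h ` Uh)"
  proof (rule bdd_aboveI2)
    fix y assume y: "y \<in> Uh"
    have "h y \<le> xi_norm \<xi> (y - x0)" by (rule hle[OF x0])
    also have "\<dots> \<le> norm (y - x0)" by (rule xi_norm_le_norm[OF xs])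
    also have "\<dots> \<le> norm y + norm x0" by (rule norm_triangle_ineq4)
    also have "\<dots> \<le> M + norm x0" using M[OF y] by simp
    finally show "h y \<le> M + norm x0" .
  qed
  have key: "\<gamma> * \<bar>s \<bullet> w\<bar> \<le> A + \<gamma> * bt * W" if s: "s \<in> proxy_set p Uh" for s
  proof -
    obtain y where y: "y \<in> Uh" "s = p + y" using s unfolding proxy_set_def by auto
    have cont: "continuous_on Uc (\<lambda>x. xi_norm \<xi> (y - x))"
      unfolding xi_norm_def by (intro continuous_intros)
    obtain x where x: "x \<in> Uc" "\<And>x'. x' \<in> Uc \<Longrightarrow> xi_norm \<xi> (y - x) \<le> xi_norm \<xi> (y - x')"
      using continuous_attains_inf[OF Ucc Ucne cont] by auto
    have hx: "h y = xi_norm \<xi> (y - x)" unfolding h_def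
      by (rule cInf_eq_minimum) (use x in auto)
    have "h y \<le> Sup (h ` Uh)" using y bdh by (auto intro: cSup_upper)
    hence dx: "xi_norm \<xi> (y - x) \<le> bt * m" using hx bt by simp
    define q where "q = p + x"
    have q: "q \<in> proxy_set p Uc" unfolding q_def proxy_set_def using x by auto
    have qn: "0 \<le> q $ j" for j using simp q by (auto simp: prob_simplex_def)
    have sq: "s = q + (y - x)" unfolding q_def y by simp
    have "\<gamma> * \<bar>q \<bullet> w\<bar> \<le> \<gamma> * (\<Sum>j\<in>UNIV. q $ j * \<bar>w $ j\<bar>)"
      unfolding inner_vec_def using g qn
      by (intro mult_left_mono order_trans[OF sum_abs]) (auto simp: abs_mult)
    also have "\<dots> = (\<Sum>j\<in>UNIV. (\<gamma> * q $ j) * \<bar>w $ j\<bar>)" by (simp add: sum_distrib_left mult.assoc)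
    also have "\<dots> \<le> (\<Sum>j\<in>UNIV. (\<alpha> * r $ j) * \<bar>w $ j\<bar>)"
      by (intro sum_mono mult_right_mono dom[OF q]) auto
    also have "\<dots> = A" unfolding A_def by (simp add: sum_distrib_left mult.assoc)
    finally have t1: "\<gamma> * \<bar>q \<bullet> w\<bar> \<le> A" .
    have "\<bar>(y - x) \<bullet> w\<bar> \<le> xi_norm \<xi> (y - x) * W / m"
      using weighted_CS[OF pos] unfolding W_def m_def by blast
    also have "\<dots> \<le> bt * m * W / m" using dx W0 m by (intro divide_right_mono mult_right_mono) auto
    also have "\<dots> = bt * W" using m by simp
    finally have t2: "\<gamma> * \<bar>(y - x) \<bullet> w\<bar> \<le> \<gamma> * (bt * W)" using g by (simp add: mult_left_mono)
    have "\<bar>s \<bullet> w\<bar> \<le> \<bar>q \<bullet> w\<bar> + \<bar>(y - x) \<bullet> w\<bar>" unfolding sq by (simp add: inner_add_left abs_triangle_ineq)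
    hence "\<gamma> * \<bar>s \<bullet> w\<bar> \<le> \<gamma> * \<bar>q \<bullet> w\<bar> + \<gamma> * \<bar>(y - x) \<bullet> w\<bar>" using g
      by (metis distrib_left mult_left_mono less_imp_le)
    thus ?thesis using t1 t2 by simp
  qed
  define B where "B = (A + \<gamma> * bt * W) / \<gamma>"
  have kB: "\<bar>s \<bullet> w\<bar> \<le> B" if "s \<in> proxy_set p Uh" for s
    using key[OF that] g unfolding B_def by (simp add: pos_le_divide_eq mult.commute)
  have ne: "proxy_set p Uh \<noteq> {}" using Uhne unfolding proxy_set_def by auto
  have bd: "bounded (proxy_set p Uh)" unfolding proxy_set_def
    using compact_imp_bounded[OF Uhc] by (simp add: bounded_translation)
  have 1: "support_fn (proxy_set p Uh) v \<le> support_fn (proxy_set p Uh) v' + B"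
    by (rule support_bound[OF ne bd]) (use kB in \<open>force simp: w_def inner_diff_right abs_le_iff\<close>)
  have 2: "support_fn (proxy_set p Uh) v' \<le> support_fn (proxy_set p Uh) v + B"
    by (rule support_bound[OF ne bd]) (use kB in \<open>force simp: w_def inner_diff_right abs_le_iff\<close>)
  have "\<bar>support_fn (proxy_set p Uh) v - support_fn (proxy_set p Uh) v'\<bar> \<le> B" using 1 2 by linarith
  hence "\<gamma> * \<bar>support_fn (proxy_set p Uh) v - support_fn (proxy_set p Uh) v'\<bar> \<le> \<gamma> * B"
    using g by (simp add: mult_left_mono)
  also have "\<gamma> * B = A + \<gamma> * bt * W" unfolding B_def using g by simp
  finally show ?thesis unfolding A_def bt_def W_def w_def .
qed


lemma jensen_sq:
  fixes r w :: "real^'n::finite"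
  assumes nn: "\<And>j. 0 \<le> r $ j" and one: "(\<Sum>j\<in>UNIV. r $ j) = 1"
  shows "(\<Sum>j\<in>UNIV. r $ j * \<bar>w $ j\<bar>)^2 \<le> (\<Sum>j\<in>UNIV. r $ j * (w $ j)^2)"
proof -
  have "(\<Sum>j\<in>UNIV. r $ j * \<bar>w $ j\<bar>)^2 = (\<Sum>j\<in>UNIV. sqrt (r$j) * (sqrt (r$j) * \<bar>w $ j\<bar>))^2"
    using nn by (simp add: mult.assoc[symmetric])
  also have "\<dots> \<le> (\<Sum>j\<in>UNIV. (sqrt (r$j))^2) * (\<Sum>j\<in>UNIV. (sqrt (r$j) * \<bar>w $ j\<bar>)^2)"
    by (rule Cauchy_Schwarz_ineq_sum)
  also have "\<dots> = (\<Sum>j\<in>UNIV. r $ j * (w $ j)^2)" using nn one by (simp add: power_mult_distrib)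
  finally show ?thesis .
qed

lemma stationary_sum:
  fixes \<xi> :: "real^'n::finite" and P :: "real^'n^'n"
  assumes "\<xi> v* P = \<xi>"
  shows "(\<Sum>i\<in>UNIV. \<xi> $ i * (\<Sum>j\<in>UNIV. P $ i $ j * f j)) = (\<Sum>j\<in>UNIV. \<xi> $ j * f j)"
proof -
  have "(\<Sum>i\<in>UNIV. \<xi> $ i * (\<Sum>j\<in>UNIV. P $ i $ j * f j)) = (\<Sum>j\<in>UNIV. (\<Sum>i\<in>UNIV. \<xi> $ i * P $ i $ j) * f j)"
    by (simp add: sum_distrib_left sum_distrib_right mult.assoc) (rule sum.swap)
  also have "\<dots> = (\<Sum>j\<in>UNIV. (\<xi> v* P) $ j * f j)" by (simp add: vector_matrix_mult_def)
  finally show ?thesis using assms by simp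
qed

theorem theorem4:
  fixes c :: "'x::finite \<Rightarrow> 'a::finite \<Rightarrow> real"
    and \<gamma> :: real
    and \<pi> :: "'x \<Rightarrow> 'a"
    and pnom :: "'x \<Rightarrow> 'a \<Rightarrow> real^'x"
    and U Uhat :: "'x \<Rightarrow> 'a \<Rightarrow> (real^'x) set"
    and Pexp :: "real^'x^'x"
    and \<xi> :: "real^'x"
    and \<Phi> :: "real^'d::finite^'x"
    and \<alpha> :: real
  assumes disc: "0 < \<gamma>" "\<gamma> < 1"
    and nominal: "\<And>i a. pnom i a \<in> prob_simplex"
    and U_ne: "\<And>i a. U i a \<noteq> {}" and U_compact: "\<And>i a. compact (U i a)"
    and U_simplex: "\<And>i a. proxy_set (pnom i a) (U i a) \<subseteq> prob_simplex"
    and Uhat_ne: "\<And>i a. Uhat i a \<noteq> {}" and Uhat_compact: "\<And>i a. compact (Uhat i a)"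
    and Uhat_sup: "\<And>i a. U i a \<subseteq> Uhat i a"
    and P_nonneg: "\<And>i j. 0 \<le> Pexp $ i $ j"
    and P_rows: "\<And>i. (\<Sum>j\<in>UNIV. Pexp $ i $ j) = 1"
    and xi_simplex: "\<xi> \<in> prob_simplex"
    and xi_pos: "\<And>i. 0 < \<xi> $ i"
    and xi_stat: "\<xi> v* Pexp = \<xi>"
    and alpha: "0 < \<alpha>" "\<alpha> < 1"
    and dom: "\<And>i j a p. p \<in> proxy_set (pnom i a) (U i a) \<Longrightarrow> \<gamma> * p $ j \<le> \<alpha> * Pexp $ i $ j"
    and small: "\<alpha>^2 + \<gamma>^2 * (Max (range (\<lambda>i. beta_coef \<xi> (U i (\<pi> i)) (Uhat i (\<pi> i)))))^2 < 1/2"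
  shows "(let \<beta> = Max (range (\<lambda>i. beta_coef \<xi> (U i (\<pi> i)) (Uhat i (\<pi> i))));
              T = proxy_bellman c \<gamma> \<pi> pnom Uhat in
           (\<forall>\<theta> \<theta>'. (xi_norm \<xi> (T (\<Phi> *v \<theta>) - T (\<Phi> *v \<theta>')))^2
                     \<le> 2 * (\<alpha>^2 + \<gamma>^2 * \<beta>^2) * (xi_norm \<xi> (\<Phi> *v \<theta> - \<Phi> *v \<theta>'))^2)
         \<and> (\<forall>\<theta> \<theta>'. \<Phi> *v \<theta> \<noteq> \<Phi> *v \<theta>' \<longrightarrow>
                 2 * (\<alpha>^2 + \<gamma>^2 * \<beta>^2) * (xi_norm \<xi> (\<Phi> *v \<theta> - \<Phi> *v \<theta>'))^2
                   < (xi_norm \<xi> (\<Phi> *v \<theta> - \<Phi> *v \<theta>'))^2)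
         \<and> ((\<forall>i. beta_coef \<xi> (U i (\<pi> i)) (Uhat i (\<pi> i)) = 0) \<longrightarrow>
              (\<forall>\<theta> \<theta>'. xi_norm \<xi> (T (\<Phi> *v \<theta>) - T (\<Phi> *v \<theta>'))
                     \<le> \<alpha> * xi_norm \<xi> (\<Phi> *v \<theta> - \<Phi> *v \<theta>'))))"
proof -
  define bi where "bi = (\<lambda>i. beta_coef \<xi> (U i (\<pi> i)) (Uhat i (\<pi> i)))"
  define \<beta> where "\<beta> = Max (range bi)"
  define T where "T = proxy_bellman c \<gamma> \<pi> pnom Uhat"
  have bi_le: "bi i \<le> \<beta>" for i unfolding \<beta>_def by (rule Max_ge) auto
  have m: "0 < xi_min \<xi>" by (rule xi_min_props(1)[OF xi_pos])
  have bi_nn: "0 \<le> bi i" for i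
  proof -
    let ?h = "\<lambda>y. Inf ((\<lambda>x. xi_norm \<xi> (y - x)) ` U i (\<pi> i))"
    obtain y where y: "y \<in> Uhat i (\<pi> i)" using Uhat_ne by blast
    have h0: "0 \<le> ?h y'" for y'
      using U_ne xi_norm_nonneg[OF xi_pos] by (intro cInf_greatest) auto
    obtain M where M: "\<And>y. y \<in> Uhat i (\<pi> i) \<Longrightarrow> norm y \<le> M"
      using compact_imp_bounded[OF Uhat_compact[of i "\<pi> i"]] by (auto simp: bounded_iff)
    obtain x0 where x0: "x0 \<in> U i (\<pi> i)" using U_ne by blast
    have bdh: "bdd_above (?h ` Uhat i (\<pi> i))"
    proof (rule bdd_aboveI2)
      fix y assume y: "y \<in> Uhat i (\<pi> i)"
      have "?h y \<le> xi_norm \<xi> (y - x0)"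
        using x0 xi_norm_nonneg[OF xi_pos] by (intro cInf_lower) (auto intro!: bdd_belowI[where m=0])
      also have "\<dots> \<le> norm (y - x0)" by (rule xi_norm_le_norm[OF xi_simplex])
      also have "\<dots> \<le> norm y + norm x0" by (rule norm_triangle_ineq4)
      also have "\<dots> \<le> M + norm x0" using M[OF y] by simp
      finally show "?h y \<le> M + norm x0" .
    qed
    have "0 \<le> Sup (?h ` Uhat i (\<pi> i))"
      using h0[of y] cSup_upper[OF imageI[OF y] bdh] by linarith
    thus ?thesis unfolding bi_def beta_coef_def using m by simp
  qed
  have b0: "0 \<le> \<beta>" using bi_nn[of undefined] bi_le[of undefined] by linarith
  have pw: "\<bar>(T v - T v') $ i\<bar> \<le> \<alpha> * (\<Sum>j\<in>UNIV. Pexp $ i $ j * \<bar>(v - v') $ j\<bar>) + \<gamma> * bi i * xi_norm \<xi> (v - v')"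
    for v v' i
  proof -
    have "(T v - T v') $ i = \<gamma> * (support_fn (proxy_set (pnom i (\<pi> i)) (Uhat i (\<pi> i))) v
         - support_fn (proxy_set (pnom i (\<pi> i)) (Uhat i (\<pi> i))) v')"
      unfolding T_def proxy_bellman_def by (simp add: algebra_simps)
    hence "\<bar>(T v - T v') $ i\<bar> = \<gamma> * \<bar>support_fn (proxy_set (pnom i (\<pi> i)) (Uhat i (\<pi> i))) v
         - support_fn (proxy_set (pnom i (\<pi> i)) (Uhat i (\<pi> i))) v'\<bar>" using disc by (simp add: abs_mult)
    also have "\<dots> \<le> \<alpha> * (\<Sum>j\<in>UNIV. (Pexp $ i) $ j * \<bar>(v - v') $ j\<bar>) + \<gamma> * bi i * xi_norm \<xi> (v - v')"
      unfolding bi_def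
      by (rule pointwise[OF disc(1) xi_pos xi_simplex U_ne U_compact Uhat_ne Uhat_compact U_simplex dom])
    finally show ?thesis .
  qed
  have a_sq: "(\<alpha> * (\<Sum>j\<in>UNIV. Pexp $ i $ j * \<bar>w $ j\<bar>))^2 \<le> \<alpha>^2 * (\<Sum>j\<in>UNIV. Pexp $ i $ j * (w $ j)^2)" for i w
    using jensen_sq[of "Pexp $ i" w] P_nonneg P_rows by (simp add: power_mult_distrib mult_left_mono)
  have sumP: "(\<Sum>i\<in>UNIV. \<xi> $ i * (\<alpha>^2 * (\<Sum>j\<in>UNIV. Pexp $ i $ j * (w $ j)^2))) = \<alpha>^2 * (xi_norm \<xi> w)^2" for w
  proof -
    have "(\<Sum>i\<in>UNIV. \<xi> $ i * (\<alpha>^2 * (\<Sum>j\<in>UNIV. Pexp $ i $ j * (w $ j)^2)))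
        = \<alpha>^2 * (\<Sum>i\<in>UNIV. \<xi> $ i * (\<Sum>j\<in>UNIV. Pexp $ i $ j * (w $ j)^2))"
      by (simp add: sum_distrib_left mult.left_commute)
    also have "\<dots> = \<alpha>^2 * (xi_norm \<xi> w)^2"
      using stationary_sum[OF xi_stat, of "\<lambda>j. (w $ j)^2"] by (simp add: xi_norm_sq[OF xi_pos])
    finally show ?thesis .
  qed
  have xi1: "(\<Sum>i\<in>UNIV. \<xi> $ i) = 1" using xi_simplex by (simp add: prob_simplex_def)
  have P1: "(xi_norm \<xi> (T v - T v'))^2 \<le> 2 * (\<alpha>^2 + \<gamma>^2 * \<beta>^2) * (xi_norm \<xi> (v - v'))^2" for v v'
  proof -
    define w where "w = v - v'"
    define W where "W = xi_norm \<xi> w"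
    have W0: "0 \<le> W" unfolding W_def by (rule xi_norm_nonneg[OF xi_pos])
    define a where "a = (\<lambda>i. \<alpha> * (\<Sum>j\<in>UNIV. Pexp $ i $ j * \<bar>w $ j\<bar>))"
    have a0: "0 \<le> a i" for i unfolding a_def using alpha P_nonneg by (intro mult_nonneg_nonneg sum_nonneg) auto
    have each: "((T v - T v') $ i)^2 \<le> 2 * (a i)^2 + 2 * (\<gamma>^2 * \<beta>^2 * W^2)" for i
    proof -
      have "\<bar>(T v - T v') $ i\<bar> \<le> a i + \<gamma> * \<beta> * W"
        using pw[of v v' i] bi_le[of i] disc W0 unfolding a_def w_def W_def
        by (smt (verit) mult_left_mono mult_right_mono)
      hence "((T v - T v') $ i)^2 \<le> (a i + \<gamma> * \<beta> * W)^2"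
        by (metis abs_ge_zero power2_abs power_mono)
      also have "\<dots> \<le> 2 * (a i)^2 + 2 * (\<gamma> * \<beta> * W)^2"
        by (smt (verit) sum_squares_ge_zero power2_sum zero_le_power2 power2_diff)
      finally show ?thesis by (simp add: power_mult_distrib)
    qed
    have "(xi_norm \<xi> (T v - T v'))^2 = (\<Sum>i\<in>UNIV. \<xi> $ i * ((T v - T v') $ i)^2)" by (rule xi_norm_sq[OF xi_pos])
    also have "\<dots> \<le> (\<Sum>i\<in>UNIV. \<xi> $ i * (2 * (\<alpha>^2 * (\<Sum>j\<in>UNIV. Pexp $ i $ j * (w $ j)^2)) + 2 * (\<gamma>^2 * \<beta>^2 * W^2)))"
    proof (rule sum_mono)
      fix i
      have "((T v - T v') $ i)^2 \<le> 2 * (\<alpha>^2 * (\<Sum>j\<in>UNIV. Pexp $ i $ j * (w $ j)^2)) + 2 * (\<gamma>^2 * \<beta>^2 * W^2)"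
        using each[of i] a_sq[of i w] unfolding a_def by linarith
      thus "\<xi> $ i * ((T v - T v') $ i)^2 \<le> \<xi> $ i * (2 * (\<alpha>^2 * (\<Sum>j\<in>UNIV. Pexp $ i $ j * (w $ j)^2)) + 2 * (\<gamma>^2 * \<beta>^2 * W^2))"
        using xi_pos[of i] by (simp add: mult_left_mono)
    qed
    also have "\<dots> = 2 * (\<Sum>i\<in>UNIV. \<xi> $ i * (\<alpha>^2 * (\<Sum>j\<in>UNIV. Pexp $ i $ j * (w $ j)^2))) + 2 * (\<gamma>^2 * \<beta>^2 * W^2) * (\<Sum>i\<in>UNIV. \<xi> $ i)"
      by (simp add: distrib_left sum.distrib sum_distrib_left sum_distrib_right algebra_simps)
    also have "\<dots> = 2 * (\<alpha>^2 + \<gamma>^2 * \<beta>^2) * W^2" unfolding sumP xi1 W_def by (simp add: algebra_simps)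
    finally show ?thesis unfolding W_def w_def .
  qed
  have P2: "2 * (\<alpha>^2 + \<gamma>^2 * \<beta>^2) * (xi_norm \<xi> (v - v'))^2 < (xi_norm \<xi> (v - v'))^2" if ne: "v \<noteq> v'" for v v' :: "real^'x"
  proof -
    obtain j where j: "(v - v') $ j \<noteq> 0" using ne by (metis vec_eq_iff right_minus_eq vector_minus_component)
    have "0 < \<xi> $ j * ((v - v') $ j)^2" using j xi_pos[of j] by simp
    also have "\<dots> \<le> (\<Sum>i\<in>UNIV. \<xi> $ i * ((v - v') $ i)^2)"
      by (rule member_le_sum) (auto intro: mult_nonneg_nonneg less_imp_le[OF xi_pos])
    finally have "0 < (xi_norm \<xi> (v - v'))^2" by (simp add: xi_norm_sq[OF xi_pos])
    moreover have "2 * (\<alpha>^2 + \<gamma>^2 * \<beta>^2) < 1" using small unfolding \<beta>_def bi_def by simp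
    ultimately show ?thesis using mult_strict_right_mono by fastforce
  qed
  have P3: "xi_norm \<xi> (T v - T v') \<le> \<alpha> * xi_norm \<xi> (v - v')" if z: "\<forall>i. bi i = 0" for v v'
  proof -
    define w where "w = v - v'"
    have "(xi_norm \<xi> (T v - T v'))^2 = (\<Sum>i\<in>UNIV. \<xi> $ i * ((T v - T v') $ i)^2)" by (rule xi_norm_sq[OF xi_pos])
    also have "\<dots> \<le> (\<Sum>i\<in>UNIV. \<xi> $ i * (\<alpha>^2 * (\<Sum>j\<in>UNIV. Pexp $ i $ j * (w $ j)^2)))"
    proof (rule sum_mono)
      fix i
      have "\<bar>(T v - T v') $ i\<bar> \<le> \<alpha> * (\<Sum>j\<in>UNIV. Pexp $ i $ j * \<bar>w $ j\<bar>)"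
        using pw[of v v' i] z unfolding w_def by simp
      hence "((T v - T v') $ i)^2 \<le> (\<alpha> * (\<Sum>j\<in>UNIV. Pexp $ i $ j * \<bar>w $ j\<bar>))^2"
        by (metis abs_ge_zero power2_abs power_mono)
      also have "\<dots> \<le> \<alpha>^2 * (\<Sum>j\<in>UNIV. Pexp $ i $ j * (w $ j)^2)" by (rule a_sq)
      finally show "\<xi> $ i * ((T v - T v') $ i)^2 \<le> \<xi> $ i * (\<alpha>^2 * (\<Sum>j\<in>UNIV. Pexp $ i $ j * (w $ j)^2))"
        using xi_pos[of i] by (simp add: mult_left_mono)
    qed
    also have "\<dots> = (\<alpha> * xi_norm \<xi> w)^2" unfolding sumP by (simp add: power_mult_distrib)
    finally have "(xi_norm \<xi> (T v - T v'))^2 \<le> (\<alpha> * xi_norm \<xi> w)^2" .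
    moreover have "0 \<le> \<alpha> * xi_norm \<xi> w" using alpha xi_norm_nonneg[OF xi_pos, of w] by simp
    ultimately show ?thesis unfolding w_def by (rule power2_le_imp_le)
  qed
  show ?thesis
    unfolding Let_def T_def[symmetric] bi_def[symmetric] \<beta>_def[symmetric]
  proof (intro conjI allI impI)
    fix \<theta> \<theta>' :: "real^'d"
    show "(xi_norm \<xi> (T (\<Phi> *v \<theta>) - T (\<Phi> *v \<theta>')))^2
                     \<le> 2 * (\<alpha>^2 + \<gamma>^2 * \<beta>^2) * (xi_norm \<xi> (\<Phi> *v \<theta> - \<Phi> *v \<theta>'))^2"
      by (rule P1)
  next
    fix \<theta> \<theta>' :: "real^'d"
    assume "\<Phi> *v \<theta> \<noteq> \<Phi> *v \<theta>'"
    thus "2 * (\<alpha>^2 + \<gamma>^2 * \<beta>^2) * (xi_norm \<xi> (\<Phi> *v \<theta> - \<Phi> *v \<theta>'))^2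
                   < (xi_norm \<xi> (\<Phi> *v \<theta> - \<Phi> *v \<theta>'))^2" by (rule P2)
  next
    fix \<theta> \<theta>' :: "real^'d"
    assume h: "\<forall>i. beta_coef \<xi> (U i (\<pi> i)) (Uhat i (\<pi> i)) = 0"
    show "xi_norm \<xi> (T (\<Phi> *v \<theta>) - T (\<Phi> *v \<theta>')) \<le> \<alpha> * xi_norm \<xi> (\<Phi> *v \<theta> - \<Phi> *v \<theta>')"
      by (rule P3) (use h in \<open>simp add: bi_def\<close>)
  qed
qed

end
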